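(* Let $I$ be a general ring and $a\in I$. Then $a$ is quasipolar in $I$ if and only if $a=s+q$ where $s\in I$ is strongly regular, $s\in\mathrm{comm}^2(a)$, $q\in QN(I)$, and $sq=qs=0$.
   Context: A general ring is an associative ring not necessarily having an identity. For $p,q\in I$, $p*q=p+q-pq$; $Q(I)=\{q\in I\mid p*q=0=q*p \text{ for some } p\in I\}$; $\mathrm{comm}(a)=\{x\in I\mid xa=ax\}$, $\mathrm{comm}^2(a)=\{x\in I\mid xy=yx\text{ for all }y\in\mathrm{comm}(a)\}$; $QN(I)=\{q\in I\mid qx\in Q(I)\text{ for every }x\in\mathrm{comm}(q)\}$. An element $a\in I$ is quasipolar in $I$ if there is an idempotent $p=p^2\in\mathrm{comm}^2(a)$ with $a+p\in Q(I)$ and $a-ap\in QN(I)$. An element $s\in I$ is strongly regular if $s=sbs$ for some $b\in I$ with $bs=sb$. *)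

theory Defs
  imports Main
begin

text \<open>A general ring (associative, not necessarily unital) is the type class ring;
  the ring I is the whole type.\<close>

definition circ_op :: "'a::ring \<Rightarrow> 'a \<Rightarrow> 'a" where
  "circ_op p q = p + q - p * q"

definition quasi_inv_set :: "'a::ring set" where
  "quasi_inv_set = {q. \<exists>p. circ_op p q = 0 \<and> circ_op q p = 0}"

definition comm_set :: "'a::ring \<Rightarrow> 'a set" where
  "comm_set a = {x. x * a = a * x}"

definition comm2_set :: "'a::ring \<Rightarrow> 'a set" where
  "comm2_set a = {x. \<forall>y\<in>comm_set a. x * y = y * x}"

definition QN_set :: "'a::ring set" where
  "QN_set = {q. \<forall>x\<in>comm_set q. q * x \<in> quasi_inv_set}"

definition quasipolar :: "'a::ring \<Rightarrow> bool" where
  "quasipolar a \<longleftrightarrow> (\<exists>p. p * p = p \<and> p \<in> comm2_set a \<and> a + p \<in> quasi_inv_set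
      \<and> a - a * p \<in> QN_set)"

definition strongly_regular :: "'a::ring \<Rightarrow> bool" where
  "strongly_regular s \<longleftrightarrow> (\<exists>b. s = s * b * s \<and> b * s = s * b)"

end

theory Submission
  imports Defs
begin

lemma quasi_comm:
  fixes p q x :: "'a::ring"
  assumes c1: "p + q - p*q = 0" and c2: "q + p - q*p = 0" and xq: "x*q = q*x"
  shows "x*p = p*x"
proof -
  have xq2: "p*(q*x) = p*(x*q)" "q*(x*p) = x*(q*p)" "p*(q*(x*p)) = p*(x*(q*p))"
    using xq by (simp_all add: mult.assoc[symmetric])
  have "x - x*p = (x - x*p) - (p+q-p*q)*(x - x*p)" by (simp add: c1)
  also have "\<dots> = (x - p*x - x*q + p*x*q) - (x - p*x - x*q + p*x*q)*p"
    using xq xq2 by (simp add: algebra_simps)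
  also have "\<dots> = (x - p*x) - (x - p*x)*(q+p-q*p)" by (simp add: algebra_simps)
  also have "\<dots> = x - p*x" by (simp add: c2)
  finally show ?thesis by simp
qed

lemma idem_comm:
  fixes s b y :: "'a::ring"
  assumes h1: "s*b*s = s" and h2: "b*s = s*b" and ys: "y*s = s*y"
  shows "y*(s*b) = (s*b)*y"
proof -
  have se: "s*(s*b) = s" using h1 h2 by (metis mult.assoc)
  have es: "(s*b)*s = s" using h1 by simp
  have "y*(s*b) - (s*b)*y*(s*b) = (y*s - (s*b)*(y*s))*b" by (simp add: algebra_simps)
  also have "\<dots> = (s*y - (s*b)*s*y)*b" using ys by (simp add: mult.assoc)
  also have "\<dots> = 0" using es by simp
  finally have A: "y*(s*b) = (s*b)*y*(s*b)" by simp
  have "(s*b)*y - (s*b)*y*(s*b) = b*(s*y - s*y*(s*b))" using h2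
    by (simp add: algebra_simps) (metis mult.assoc)
  also have "\<dots> = b*(y*s - y*(s*(s*b)))" using ys by (metis mult.assoc)
  also have "\<dots> = 0" using se by simp
  finally have B: "(s*b)*y = (s*b)*y*(s*b)" by simp
  show ?thesis using A B by simp
qed

lemma fwd:
  fixes a :: "'a::ring"
  assumes "quasipolar a"
  shows "\<exists>s q. a = s + q \<and> strongly_regular s \<and> s \<in> comm2_set a \<and> q \<in> QN_set
       \<and> s * q = 0 \<and> q * s = 0"
proof -
  obtain p where pp: "p*p = p" and pc: "p \<in> comm2_set a" and pq: "a + p \<in> quasi_inv_set"
    and qn: "a - a*p \<in> QN_set" using assms unfolding quasipolar_def by blast
  obtain r where r1: "r + (a+p) - r*(a+p) = 0" and r2: "(a+p) + r - (a+p)*r = 0"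
    using pq unfolding quasi_inv_set_def circ_op_def by blast
  have pa: "p*a = a*p" using pc unfolding comm2_set_def comm_set_def by auto
  have ra: "a*r = r*a"
    by (rule quasi_comm[OF r1 r2]) (simp add: algebra_simps pa)
  have rp: "p*r = r*p"
    by (rule quasi_comm[OF r1 r2]) (simp add: algebra_simps pa pp)
  have "(r + (a+p) - r*(a+p))*p = 0" using r1 by simp
  hence "r*p + a*p + p - r*a*p - r*p = 0" using pp by (simp add: algebra_simps)
  hence peq: "p = r*a*p - a*p" by (simp add: algebra_simps)
  define b where "b = p*r - p"
  have sb: "(a*p)*b = p"
  proof -
    have "(a*p)*b = a*(p*p)*r - a*(p*p)" unfolding b_def by (simp add: algebra_simps)
    also have "\<dots> = r*a*p - a*p" using pp ra rp by (metis mult.assoc)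
    finally show ?thesis using peq by simp
  qed
  have bs: "b*(a*p) = p"
  proof -
    have "b*(a*p) = p*(r*a*p) - p*a*p" unfolding b_def by (simp add: algebra_simps)
    also have "\<dots> = r*a*p - a*p" using pp pa rp by (metis mult.assoc)
    finally show ?thesis using peq by simp
  qed
  have "(a*p)*b*(a*p) = a*p" using sb pp pa by (metis mult.assoc)
  hence sr: "strongly_regular (a*p)" unfolding strongly_regular_def using sb bs by metis
  have sc: "a*p \<in> comm2_set a"
  proof -
    { fix y assume "y \<in> comm_set a"
      hence "y*a = a*y" "p*y = y*p" using pc unfolding comm_set_def comm2_set_def by auto
      hence "a*p*y = y*(a*p)" by (metis mult.assoc) }
    thus ?thesis unfolding comm2_set_def by blast
  qed
  have z1: "(a*p)*(a - a*p) = 0" using pp pa by (simp add: algebra_simps) (metis mult.assoc)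
  have z2: "(a - a*p)*(a*p) = 0" using pp pa by (simp add: algebra_simps) (metis mult.assoc)
  show ?thesis
    by (rule exI[of _ "a*p"], rule exI[of _ "a - a*p"]) (simp add: sr sc qn z1 z2)
qed


lemma kill_r:
  fixes r x qq :: "'a::ring"
  assumes r1: "r + qq - r*qq = 0" and r2: "qq + r - qq*r = 0"
    and "x*qq = 0" and "qq*x = 0"
  shows "r*x = 0" "x*r = 0"
proof -
  have ra: "r = r*qq - qq" using r1 by (simp add: algebra_simps)
  have rb: "r = qq*r - qq" using r2 by (simp add: algebra_simps)
  have "r*x = r*(qq*x) - qq*x" by (subst ra) (simp add: algebra_simps)
  thus "r*x = 0" using assms by simp
  have "x*r = (x*qq)*r - x*qq" by (subst rb) (simp add: algebra_simps)
  thus "x*r = 0" using assms by simp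
qed

lemma bwd:
  fixes a :: "'a::ring"
  assumes "\<exists>s q. a = s + q \<and> strongly_regular s \<and> s \<in> comm2_set a \<and> q \<in> QN_set
       \<and> s * q = 0 \<and> q * s = 0"
  shows "quasipolar a"
proof -
  obtain s q b where a: "a = s + q" and h1: "s = s*b*s" and h2: "b*s = s*b"
    and sc: "s \<in> comm2_set a" and qn: "q \<in> QN_set" and sq: "s*q = 0" and qs: "q*s = 0"
    using assms unfolding strongly_regular_def by blast
  define e where "e = s*b"
  define b' where "b' = b*s*b"
  have ee: "e*e = e" unfolding e_def using h1 by (metis mult.assoc)
  have se: "s*e = s" unfolding e_def using h1 h2 by (metis mult.assoc)
  have es: "e*s = s" unfolding e_def using h1 by simp
  have eq: "e*q = 0" unfolding e_def using h2 sq by (metis mult.assoc mult_zero_right)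
  have qe: "q*e = 0" unfolding e_def using qs by (metis mult.assoc mult_zero_left)
  have bs: "b'*s = e" unfolding e_def b'_def using h1 h2 by (metis mult.assoc)
  have sb': "s*b' = e" unfolding e_def b'_def using h1 h2 by (metis mult.assoc)
  have b'q: "b'*q = 0" unfolding b'_def using h2 sq by (metis mult.assoc mult_zero_right)
  have qb': "q*b' = 0" unfolding b'_def using h2 qs by (metis mult.assoc mult_zero_left)
  have b'e: "b'*e = b'" unfolding e_def b'_def using h1 h2 by (metis mult.assoc)
  have eb': "e*b' = b'" unfolding e_def b'_def using h1 h2 by (metis mult.assoc)
  have ec: "e \<in> comm2_set a"
  proof -
    { fix y assume "y \<in> comm_set a"
      hence "y*s = s*y" using sc unfolding comm2_set_def by auto
      hence "e*y = y*e" unfolding e_def using idem_comm[of s b y] h1 h2 by simp }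
    thus ?thesis unfolding comm2_set_def by blast
  qed
  have ae: "a - a*e = q" unfolding a using se qe by (simp add: algebra_simps)
  have "q \<in> comm_set q" unfolding comm_set_def by simp
  hence "q*q \<in> quasi_inv_set" using qn unfolding QN_set_def by blast
  then obtain r where r1: "r + q*q - r*(q*q) = 0" and r2: "q*q + r - (q*q)*r = 0"
    unfolding quasi_inv_set_def circ_op_def by blast
  have rq: "q*r = r*q" by (rule quasi_comm[OF r1 r2]) (simp add: mult.assoc)
  have rs: "r*s = 0" "s*r = 0" by (rule kill_r[OF r1 r2]; simp add: mult.assoc[symmetric] sq qs mult.assoc qs)+
  have re: "r*e = 0" "e*r = 0" by (rule kill_r[OF r1 r2]; simp add: mult.assoc[symmetric] eq qe mult.assoc)+
  have rb: "r*b' = 0" "b'*r = 0" by (rule kill_r[OF r1 r2]; simp add: mult.assoc[symmetric] b'q qb' mult.assoc)+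
  define t where "t = r + q*r - q"
  have ct1: "t + q - t*q = 0" using r1 rq unfolding t_def
    by (simp add: algebra_simps)
  have ct2: "q + t - q*t = 0" using r2 rq unfolding t_def
    by (simp add: algebra_simps)
  have ts: "t*s = 0" "s*t = 0" unfolding t_def using rs sq qs
    by (simp add: algebra_simps, simp add: algebra_simps mult.assoc[symmetric])
  have te: "t*e = 0" "e*t = 0" unfolding t_def using re eq qe
    by (simp add: algebra_simps, simp add: algebra_simps mult.assoc[symmetric])
  have tb: "t*b' = 0" "b'*t = 0" unfolding t_def using rb b'q qb'
    by (simp add: algebra_simps, simp add: algebra_simps mult.assoc[symmetric])
  define w where "w = b' + e + t"
  have "w + (a+e) - w*(a+e) = t + q - t*q" unfolding w_def a
    using ee se es eq qe bs sb' b'q qb' b'e eb' ts te tb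
    by (simp add: ring_distribs algebra_simps)
  hence c1: "circ_op w (a+e) = 0" using ct1 unfolding circ_op_def by simp
  have "(a+e) + w - (a+e)*w = q + t - q*t" unfolding w_def a
    using ee se es eq qe bs sb' b'q qb' b'e eb' ts te tb
    by (simp add: ring_distribs algebra_simps)
  hence c2: "circ_op (a+e) w = 0" using ct2 unfolding circ_op_def by simp
  have "a + e \<in> quasi_inv_set" unfolding quasi_inv_set_def using c1 c2 by blast
  thus ?thesis unfolding quasipolar_def using ee ec ae qn by auto
qed

theorem theorem2p16:
  fixes a :: "'a::ring"
  shows "quasipolar a \<longleftrightarrow>
    (\<exists>s q. a = s + q \<and> strongly_regular s \<and> s \<in> comm2_set a \<and> q \<in> QN_set
       \<and> s * q = 0 \<and> q * s = 0)"
  using fwd bwd by blast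

end
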